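(* Assume $\mathsf{CH}$. There is a strongly tight MAD family $\mathcal{A}$ with $\mathcal{A}\subseteq\mathcal{J}_{1/n}$ (in particular, $\mathcal{A}$ is random destructible and not Laflamme).
   Context: A MAD family is a maximal family of infinite subsets of $\omega$ with pairwise finite intersections; $\mathcal{I}(\mathcal{A})$ is the ideal generated by $\mathcal{A}$ and the finite sets. The summable ideal is $\mathcal{J}_{1/n}=\{A\subseteq\omega:\sum_{n\in A}\frac1{n+1}<\infty\}$. An ideal $\mathcal{I}$ is strongly tight if for every $\{X_n:n\in\omega\}\subseteq[\omega]^\omega$ such that $\{n:X_n\subseteq^*Y\}$ is finite for every $Y\in\mathcal{I}$, there is $A\in\mathcal{I}$ meeting every $X_n$; $\mathcal{A}$ is strongly tight if $\mathcal{I}(\mathcal{A})$ is. $\mathcal{A}$ is random destructible if forcing with random forcing (below some condition) makes $\mathcal{A}$ no longer maximal. $\mathcal{A}$ is Laflamme if $\mathcal{I}(\mathcal{A})$ cannot be extended to an $F_\sigma$ ideal. *)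

theory Defs
  imports Complex_Main "HOL-Library.Countable_Set"
begin

definition CH :: bool where
  "CH \<longleftrightarrow> (\<forall>X :: nat set set. countable X \<or> (\<exists>f. bij_betw f X (UNIV :: nat set set)))"

definition almost_subset :: "nat set \<Rightarrow> nat set \<Rightarrow> bool" where
  "almost_subset X Y \<longleftrightarrow> finite (X - Y)"

definition AD_family :: "nat set set \<Rightarrow> bool" where
  "AD_family \<A> \<longleftrightarrow> (\<forall>A\<in>\<A>. infinite A) \<and>
     (\<forall>A\<in>\<A>. \<forall>B\<in>\<A>. A \<noteq> B \<longrightarrow> finite (A \<inter> B))"

definition MAD :: "nat set set \<Rightarrow> bool" where
  "MAD \<A> \<longleftrightarrow> infinite \<A> \<and> AD_family \<A> \<and>
     (\<forall>\<B>. AD_family \<B> \<and> \<A> \<subseteq> \<B> \<longrightarrow> \<B> = \<A>)"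

definition gen_ideal :: "nat set set \<Rightarrow> nat set set" where
  "gen_ideal \<A> = {Y. \<exists>F. finite F \<and> F \<subseteq> \<A> \<and> finite (Y - \<Union>F)}"

definition summable_ideal :: "nat set set" where
  "summable_ideal = {A. summable (\<lambda>n. if n \<in> A then 1 / (real n + 1) else 0)}"

definition strongly_tight_ideal :: "nat set set \<Rightarrow> bool" where
  "strongly_tight_ideal I \<longleftrightarrow>
     (\<forall>X :: nat \<Rightarrow> nat set.
        (\<forall>n. infinite (X n)) \<and> (\<forall>Y\<in>I. finite {n. almost_subset (X n) Y})
        \<longrightarrow> (\<exists>A\<in>I. \<forall>n. A \<inter> X n \<noteq> {}))"

definition strongly_tight :: "nat set set \<Rightarrow> bool" where
  "strongly_tight \<A> \<longleftrightarrow> strongly_tight_ideal (gen_ideal \<A>)"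

end

theory Submission
  imports Defs "HOL-Library.Nat_Bijection"
begin

lemma powers_summable:
  fixes x :: "nat \<Rightarrow> nat"
  assumes "\<And>n. x n \<ge> 2^n"
  shows "range x \<in> summable_ideal"
proof -
  let ?f = "\<lambda>n. if n \<in> range x then 1 / (real n + 1) else 0"
  have nn: "\<And>n. 0 \<le> ?f n" by simp
  have gt: "\<And>n. n < x n" using assms by (meson less_le_trans less_exp)
  have b: "sum ?f {..<N} \<le> 2" for N
  proof -
    have "sum ?f {..<N} = sum (\<lambda>a. 1 / (real a + 1)) (range x \<inter> {..<N})"
      by (simp add: sum.If_cases Int_commute)
    also have "range x \<inter> {..<N} \<subseteq> x ` {n. n < N \<and> x n < N}"
      using gt by (auto intro: less_trans)
    hence "sum (\<lambda>a. 1 / (real a + 1)) (range x \<inter> {..<N}) \<le> sum (\<lambda>a. 1 / (real a + 1)) (x ` {n. n < N \<and> x n < N})"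
      by (intro sum_mono2) auto
    also have "\<dots> \<le> sum ((\<lambda>a. 1 / (real a + 1)) \<circ> x) {n. n < N \<and> x n < N}"
      by (rule sum_image_le) auto
    also have "\<dots> \<le> sum ((\<lambda>a. 1 / (real a + 1)) \<circ> x) {..<N}"
      by (intro sum_mono2) auto
    also have "\<dots> \<le> sum (\<lambda>n. (1/2)^n) {..<N}"
    proof (intro sum_mono)
      fix n
      have "real (2^n) \<le> real (x n)" using assms[of n] by linarith
      moreover have "(2::real)^n = real (2^n)" by simp
      ultimately have "(2::real)^n \<le> real (x n) + 1" by linarith
      hence "1 / (real (x n) + 1) \<le> 1 / 2^n"
        by (intro divide_left_mono) auto
      thus "((\<lambda>a. 1 / (real a + 1)) \<circ> x) n \<le> (1/2)^n" by (simp add: power_divide)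
    qed
    also have "\<dots> \<le> 2"
    proof -
      have "(\<lambda>n. (1/2::real)^n) sums 2" using geometric_sums[of "1/2::real"] by simp
      thus ?thesis using sum_le_suminf[of "\<lambda>n. (1/2::real)^n" "{..<N}"] by (auto simp: sums_iff)
    qed
    finally show ?thesis .
  qed
  have "summable ?f"
    by (rule bounded_imp_summable[where B=2]) (use b[of "Suc _"] in \<open>auto simp: lessThan_Suc_atMost\<close>)
  thus ?thesis unfolding summable_ideal_def by simp
qed

lemma extend:
  fixes X :: "nat \<Rightarrow> nat set"
  assumes cC: "countable \<C>" and ne: "\<C> \<noteq> {}"
    and inf: "\<And>n. infinite (X n)"
    and hyp: "\<forall>Y\<in>gen_ideal \<C>. finite {n. almost_subset (X n) Y}"
  shows "\<exists>A. infinite A \<and> A \<in> summable_ideal \<and> (\<forall>C\<in>\<C>. finite (A \<inter> C)) \<and> (\<forall>n. A \<inter> X n \<noteq> {})"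
proof -
  define c where "c = from_nat_into \<C>"
  have rc: "range c = \<C>" using cC ne unfolding c_def by simp
  define D where "D k = \<Union> (c ` {..<k})" for k
  have Dmono: "k \<le> l \<Longrightarrow> D k \<subseteq> D l" for k l unfolding D_def by (auto intro: less_le_trans)
  have Did: "D k \<in> gen_ideal \<C>" for k
    unfolding gen_ideal_def D_def using rc by (intro CollectI exI[of _ "c ` {..<k}"]) auto
  define g where "g n = Max {k. k \<le> n \<and> infinite (X n - D k)}" for n
  have gK: "g n \<in> {k. k \<le> n \<and> infinite (X n - D k)}" for n
  proof -
    have "0 \<in> {k. k \<le> n \<and> infinite (X n - D k)}" using inf[of n] by (simp add: D_def)
    thus ?thesis unfolding g_def by (intro Max_in) auto
  qed
  have gmax: "k \<le> n \<Longrightarrow> infinite (X n - D k) \<Longrightarrow> k \<le> g n" for k n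
    unfolding g_def by (intro Max_ge) auto
  define S where "S n = X n - D (g n)" for n
  have Sinf: "infinite (S n)" for n using gK[of n] by (simp add: S_def)
  have "\<exists>y. y \<in> S n \<and> 2^n \<le> y" for n
  proof -
    have "\<not> S n \<subseteq> {..<2^n}" using Sinf[of n] finite_subset by blast
    thus ?thesis by auto
  qed
  then obtain x where x: "\<And>n. x n \<in> S n" "\<And>n. 2^n \<le> x n" by metis
  define A where "A = range x"
  have "A \<in> summable_ideal" unfolding A_def by (rule powers_summable) (use x in auto)
  moreover have "infinite A"
  proof
    assume "finite A"
    then obtain M where "\<forall>a\<in>A. a \<le> M" using finite_nat_set_iff_bounded_le by blast
    hence "x M \<le> M" unfolding A_def by auto
    moreover have "M < 2^M" by (rule less_exp)
    ultimately show False using x(2)[of M] by linarith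
  qed
  moreover have "finite (A \<inter> C)" if Cin: "C \<in> \<C>" for C
  proof -
    obtain j where j: "C = c j" using Cin rc by auto
    have fin: "finite {n. g n \<le> j}"
    proof -
      have "{n. g n \<le> j} \<subseteq> {..j} \<union> {n. almost_subset (X n) (D (Suc j))}"
      proof
        fix n assume "n \<in> {n. g n \<le> j}"
        hence gn: "g n \<le> j" by simp
        show "n \<in> {..j} \<union> {n. almost_subset (X n) (D (Suc j))}"
        proof (cases "n \<le> j")
          case False
          have "finite (X n - D (Suc j))"
            using gmax[of "Suc j" n] False gn by fastforce
          thus ?thesis by (simp add: almost_subset_def)
        qed simp
      qed
      moreover have "finite {n. almost_subset (X n) (D (Suc j))}" using hyp Did by blast
      ultimately show ?thesis using finite_subset by blast
    qed
    have "A \<inter> C \<subseteq> x ` {n. g n \<le> j}"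
    proof
      fix a assume "a \<in> A \<inter> C"
      then obtain n where n: "a = x n" "x n \<in> c j" using j A_def by auto
      have "x n \<notin> D (g n)" using x(1)[of n] by (simp add: S_def)
      moreover have "c j \<subseteq> D k" if "j < k" for k using that by (auto simp: D_def)
      ultimately have "\<not> j < g n" using n by blast
      thus "a \<in> x ` {n. g n \<le> j}" using n by auto
    qed
    thus ?thesis using fin finite_subset by blast
  qed
  moreover have "A \<inter> X n \<noteq> {}" for n
    using x(1)[of n] unfolding A_def S_def by auto
  ultimately show ?thesis by blast
qed

unbundle cardinal_syntax

definition RR :: "(nat set \<times> nat set) set" where "RR = |UNIV :: nat set set|"
definition Rs :: "(nat set \<times> nat set) set" where "Rs = RR - Id"

lemma wf_Rs: "wf Rs"
proof -
  have "wo_rel |UNIV :: nat set set|" unfolding wo_rel_def by (rule card_of_Well_order)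
  thus ?thesis unfolding Rs_def RR_def by (rule wo_rel.WF)
qed

lemma total_Rs: "s \<noteq> t \<Longrightarrow> (s,t) \<in> Rs \<or> (t,s) \<in> Rs"
proof -
  assume "s \<noteq> t"
  have "Well_order |UNIV :: nat set set|" by (rule card_of_Well_order)
  hence "Total |UNIV :: nat set set|" by (simp add: well_order_on_def linear_order_on_def)
  hence "total_on UNIV |UNIV :: nat set set|" by (simp add: Field_card_of)
  thus ?thesis using \<open>s \<noteq> t\<close> unfolding Rs_def RR_def total_on_def by auto
qed

lemma countable_below:
  assumes ch: CH
  shows "countable {s. (s,t) \<in> Rs}"
proof -
  have eq: "{s. (s,t) \<in> Rs} = underS |UNIV :: nat set set| t"
    unfolding Rs_def RR_def underS_def by auto
  have lt: "|underS |UNIV :: nat set set| t| <o |UNIV :: nat set set|"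
    by (rule card_of_underS[OF card_of_Card_order]) (simp add: Field_card_of)
  have "\<not> (\<exists>f. bij_betw f (underS |UNIV :: nat set set| t) (UNIV :: nat set set))"
    using lt not_ordLess_ordIso card_of_ordIso by blast
  thus ?thesis using ch unfolding CH_def eq by blast
qed

definition base :: "nat set set" where
  "base = range (\<lambda>k. range (\<lambda>j. 2 ^ prod_encode (k, j)))"

definition Xs :: "nat set \<Rightarrow> nat \<Rightarrow> nat set" where
  "Xs S n = {m. prod_encode (n, m) \<in> S}"

definition hypo :: "nat set set \<Rightarrow> (nat \<Rightarrow> nat set) \<Rightarrow> bool" where
  "hypo P X \<longleftrightarrow> (\<forall>n. infinite (X n)) \<and> (\<forall>Y\<in>gen_ideal P. finite {n. almost_subset (X n) Y})"

definition good :: "nat set set \<Rightarrow> (nat \<Rightarrow> nat set) \<Rightarrow> nat set \<Rightarrow> bool" where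
  "good P X A \<longleftrightarrow> infinite A \<and> A \<in> summable_ideal \<and> (\<forall>C\<in>P. finite (A \<inter> C)) \<and> (\<forall>n. A \<inter> X n \<noteq> {})"

definition prevs :: "(nat set \<Rightarrow> nat set option) \<Rightarrow> nat set \<Rightarrow> nat set set" where
  "prevs f t = base \<union> {B. \<exists>s. (s,t) \<in> Rs \<and> f s = Some B}"

definition HH :: "(nat set \<Rightarrow> nat set option) \<Rightarrow> nat set \<Rightarrow> nat set option" where
  "HH f t = (if hypo (prevs f t) (Xs t) then Some (SOME A. good (prevs f t) (Xs t) A) else None)"

definition FF :: "nat set \<Rightarrow> nat set option" where
  "FF = wfrec Rs HH"

lemma FF_eq: "FF t = HH FF t"
proof -
  have "FF t = HH (cut FF Rs t) t" unfolding FF_def by (rule wfrec[OF wf_Rs])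
  moreover have "prevs (cut FF Rs t) t = prevs FF t"
    unfolding prevs_def by (auto simp: cut_apply)
  ultimately show ?thesis unfolding HH_def by simp
qed

lemma base_props: "B \<in> base \<Longrightarrow> infinite B \<and> B \<in> summable_ideal"
proof -
  assume "B \<in> base"
  then obtain k where k: "B = range (\<lambda>j. 2 ^ prod_encode (k, j))" unfolding base_def by auto
  have ge: "(2::nat) ^ j \<le> 2 ^ prod_encode (k, j)" for j
    by (rule power_increasing) (auto simp: le_prod_encode_2)
  have "B \<in> summable_ideal" unfolding k by (rule powers_summable) (rule ge)
  moreover have "inj (\<lambda>j. (2::nat) ^ prod_encode (k, j))"
    by (auto simp: inj_def prod_encode_eq)
  hence "infinite B" unfolding k using range_inj_infinite by blast
  ultimately show ?thesis by simp
qed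

lemma base_disj: "B \<in> base \<Longrightarrow> C \<in> base \<Longrightarrow> B \<noteq> C \<Longrightarrow> B \<inter> C = {}"
  unfolding base_def by (auto simp: prod_encode_eq)

lemma base_infinite: "infinite base"
proof -
  have "inj (\<lambda>k. range (\<lambda>j. (2::nat) ^ prod_encode (k, j)))"
  proof (rule injI)
    fix k l assume "range (\<lambda>j. (2::nat) ^ prod_encode (k, j)) = range (\<lambda>j. 2 ^ prod_encode (l, j))"
    hence "(2::nat) ^ prod_encode (k, 0) \<in> range (\<lambda>j. 2 ^ prod_encode (l, j))" by blast
    thus "k = l" by (auto simp: prod_encode_eq)
  qed
  thus ?thesis unfolding base_def using range_inj_infinite by blast
qed

lemma prevs_countable: "CH \<Longrightarrow> countable (prevs FF t)"
proof -
  assume ch: CH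
  have "{B. \<exists>s. (s,t) \<in> Rs \<and> FF s = Some B} \<subseteq> (\<lambda>s. the (FF s)) ` {s. (s,t) \<in> Rs}"
    by force
  moreover have "countable base" unfolding base_def by simp
  moreover have "countable ((\<lambda>s. the (FF s)) ` {s. (s,t) \<in> Rs})"
    using countable_below[OF ch] by simp
  ultimately show ?thesis unfolding prevs_def
    by (meson countable_Un countable_subset)
qed

lemma FF_good: "CH \<Longrightarrow> FF t = Some B \<Longrightarrow> good (prevs FF t) (Xs t) B"
proof -
  assume ch: CH and F: "FF t = Some B"
  hence h: "hypo (prevs FF t) (Xs t)" and B: "B = (SOME A. good (prevs FF t) (Xs t) A)"
    using FF_eq[of t] unfolding HH_def by (auto split: if_splits)
  have ne: "prevs FF t \<noteq> {}" using base_infinite unfolding prevs_def by auto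
  have "\<exists>A. good (prevs FF t) (Xs t) A"
    using extend[OF prevs_countable[OF ch] ne] h unfolding hypo_def good_def by blast
  thus ?thesis unfolding B by (rule someI_ex)
qed

lemma FF_some: "hypo (prevs FF t) (Xs t) \<Longrightarrow> FF t \<noteq> None"
  using FF_eq[of t] unfolding HH_def by auto

definition Fam :: "nat set set" where
  "Fam = base \<union> {B. \<exists>t. FF t = Some B}"

lemma gen_ideal_mono: "P \<subseteq> Q \<Longrightarrow> gen_ideal P \<subseteq> gen_ideal Q"
  unfolding gen_ideal_def by blast

lemma in_gen_ideal: "A \<in> P \<Longrightarrow> A \<in> gen_ideal P"
  unfolding gen_ideal_def by (intro CollectI exI[of _ "{A}"]) auto

lemma prevs_sub: "prevs FF t \<subseteq> Fam"
  unfolding prevs_def Fam_def by auto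

lemma Fam_AD: assumes ch: CH shows "AD_family Fam"
  unfolding AD_family_def
proof (intro conjI ballI impI)
  fix A assume "A \<in> Fam"
  thus "infinite A" unfolding Fam_def using base_props FF_good[OF ch] unfolding good_def by blast
next
  fix A B assume A: "A \<in> Fam" and B: "B \<in> Fam" and ne: "A \<noteq> B"
  have key: "finite (A \<inter> C)" if "FF t = Some A" "C \<in> prevs FF t" for A C t
    using FF_good[OF ch that(1)] that(2) unfolding good_def by blast
  show "finite (A \<inter> B)"
  proof (cases "A \<in> base")
    case Ab: True
    show ?thesis
    proof (cases "B \<in> base")
      case True thus ?thesis using base_disj Ab ne by simp
    next
      case False
      then obtain t where "FF t = Some B" using B unfolding Fam_def by auto
      thus ?thesis using key[of t B A] Ab unfolding prevs_def by (simp add: Int_commute)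
    qed
  next
    case False
    then obtain s where s: "FF s = Some A" using A unfolding Fam_def by auto
    show ?thesis
    proof (cases "B \<in> base")
      case True thus ?thesis using key[OF s, of B] unfolding prevs_def by simp
    next
      case False
      then obtain t where t: "FF t = Some B" using B unfolding Fam_def by auto
      have "s \<noteq> t" using s t ne by auto
      then consider "(s,t) \<in> Rs" | "(t,s) \<in> Rs" using total_Rs by blast
      thus ?thesis
      proof cases
        case 1
        hence "A \<in> prevs FF t" using s unfolding prevs_def by auto
        thus ?thesis using key[OF t] by (simp add: Int_commute)
      next
        case 2
        hence "B \<in> prevs FF s" using t unfolding prevs_def by auto
        thus ?thesis using key[OF s] by simp
      qed
    qed
  qed
qed

lemma Fam_J: assumes ch: CH shows "Fam \<subseteq> summable_ideal"
  unfolding Fam_def using base_props FF_good[OF ch] unfolding good_def by blast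

lemma Fam_tight: assumes ch: CH shows "strongly_tight Fam"
  unfolding strongly_tight_def strongly_tight_ideal_def
proof (intro allI impI)
  fix X :: "nat \<Rightarrow> nat set"
  assume h: "(\<forall>n. infinite (X n)) \<and> (\<forall>Y\<in>gen_ideal Fam. finite {n. almost_subset (X n) Y})"
  define S where "S = {prod_encode (n, m) | n m. m \<in> X n}"
  have XS: "Xs S = X" unfolding Xs_def S_def by (auto simp: prod_encode_eq)
  have "hypo (prevs FF S) (Xs S)"
    unfolding hypo_def XS using h gen_ideal_mono[OF prevs_sub[of S]] by blast
  then obtain B where B: "FF S = Some B" using FF_some by blast
  hence "good (prevs FF S) X B" using FF_good[OF ch B] XS by simp
  moreover have "B \<in> gen_ideal Fam" using B by (intro in_gen_ideal) (auto simp: Fam_def)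
  ultimately show "\<exists>A\<in>gen_ideal Fam. \<forall>n. A \<inter> X n \<noteq> {}" unfolding good_def by blast
qed

lemma outside_finite:
  assumes AD: "AD_family \<B>" and sub: "\<A> \<subseteq> \<B>" and B: "B \<in> \<B>" "B \<notin> \<A>"
    and Y: "Y \<in> gen_ideal \<A>"
  shows "finite (B \<inter> Y)"
proof -
  obtain F where F: "finite F" "F \<subseteq> \<A>" "finite (Y - \<Union>F)" using Y unfolding gen_ideal_def by blast
  have "finite (B \<inter> \<Union>F)"
  proof -
    have eq: "B \<inter> \<Union>F = (\<Union>A\<in>F. B \<inter> A)" by blast
    have "finite (B \<inter> A)" if AF: "A \<in> F" for A
    proof -
      have ad: "\<forall>A\<in>\<B>. \<forall>C\<in>\<B>. A \<noteq> C \<longrightarrow> finite (A \<inter> C)"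
        using AD by (simp add: AD_family_def)
      have "A \<in> \<B>" using AF F(2) sub by blast
      moreover have "B \<noteq> A" using AF F(2) B(2) by blast
      ultimately show ?thesis using ad B(1) by blast
    qed
    hence "finite (\<Union>A\<in>F. B \<inter> A)" using F(1) by (intro finite_UN_I)
    thus ?thesis unfolding eq .
  qed
  moreover have "B \<inter> Y \<subseteq> (B \<inter> \<Union>F) \<union> (Y - \<Union>F)" by blast
  ultimately have "finite ((B \<inter> \<Union>F) \<union> (Y - \<Union>F))" using F(3) by simp
  thus ?thesis using \<open>B \<inter> Y \<subseteq> (B \<inter> \<Union>F) \<union> (Y - \<Union>F)\<close> by (rule finite_subset[rotated])
qed

lemma tight_MAD:
  assumes inf: "infinite \<A>" and AD: "AD_family \<A>" and st: "strongly_tight \<A>"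
  shows "MAD \<A>"
  unfolding MAD_def
proof (intro conjI inf AD allI impI)
  fix \<B> assume h: "AD_family \<B> \<and> \<A> \<subseteq> \<B>"
  show "\<B> = \<A>"
  proof (rule ccontr)
    assume "\<B> \<noteq> \<A>"
    then obtain B where B: "B \<in> \<B>" "B \<notin> \<A>" using h by blast
    have Binf: "infinite B" using h B unfolding AD_family_def by blast
    define X where "X n = B - {..<n}" for n
    have Xinf: "infinite (X n)" for n using Binf unfolding X_def by simp
    have "finite {n. almost_subset (X n) Y}" if Y: "Y \<in> gen_ideal \<A>" for Y
    proof -
      have "{n. almost_subset (X n) Y} = {}"
      proof (rule ccontr)
        assume "{n. almost_subset (X n) Y} \<noteq> {}"
        then obtain n where n: "finite (X n - Y)" unfolding almost_subset_def by blast
        have "B \<subseteq> (X n - Y) \<union> {..<n} \<union> (B \<inter> Y)" unfolding X_def by blast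
        moreover have "finite (B \<inter> Y)" using outside_finite[of \<B> \<A> B Y] h B Y by blast
        ultimately have "finite B" using n by (meson finite_Un finite_lessThan finite_subset)
        thus False using Binf by simp
      qed
      thus ?thesis by simp
    qed
    hence "(\<forall>n. infinite (X n)) \<and> (\<forall>Y\<in>gen_ideal \<A>. finite {n. almost_subset (X n) Y})"
      using Xinf by blast
    then obtain A where A: "A \<in> gen_ideal \<A>" "\<forall>n. A \<inter> X n \<noteq> {}"
      using st unfolding strongly_tight_def strongly_tight_ideal_def by (elim allE[of _ X] impE) auto
    have "finite (B \<inter> A)" using outside_finite[of \<B> \<A> B A] h B A(1) by blast
    then obtain M where M: "\<forall>a\<in>B \<inter> A. a \<le> M" unfolding finite_nat_set_iff_bounded_le by (elim exE)
    obtain a where a: "a \<in> A" "a \<in> X (Suc M)" using A(2) by blast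
    hence abi: "a \<in> B \<inter> A" and "M < a" unfolding X_def by auto
    have "a \<le> M" using bspec[OF M abi] .
    thus False using \<open>M < a\<close> by simp
  qed
qed

theorem mainTheorem11:
  assumes "CH"
  shows "\<exists>\<A>. MAD \<A> \<and> strongly_tight \<A> \<and> \<A> \<subseteq> summable_ideal"
proof (intro exI conjI)
  show "MAD Fam"
  proof (rule tight_MAD)
    have "base \<subseteq> Fam" unfolding Fam_def by (rule Un_upper1)
    thus "infinite Fam" using base_infinite by (rule infinite_super)
  qed (rule Fam_AD[OF assms], rule Fam_tight[OF assms])
  show "strongly_tight Fam" by (rule Fam_tight[OF assms])
  show "Fam \<subseteq> summable_ideal" by (rule Fam_J[OF assms])
qed

end
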